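(* For every integer $N\ge 1$, \[ \tilde S(N)-S(N)\le N\tau(N)\quad\text{and}\quad S(N)-\bar S(N)\le N\tau(N). \]
   Context: For $E\subset\mathbb{R}$, $q(E)=\min\{q\in\mathbb{N}^*:\exists p\in\mathbb{Z},\ p/q\in E\}$ (the smallest denominator of a rational number in $E$). Define $S(N)=\sum_{j=1}^N q\big(\,]\tfrac{j-1}N,\tfrac jN]\,\big)$, $\bar S(N)=\sum_{j=1}^N q\big([\tfrac{j-1}N,\tfrac jN]\big)$, $\tilde S(N)=\sum_{j=1}^N q\big(\,]\tfrac{j-1}N,\tfrac jN[\,\big)$. $\tau(N)$ is the number of divisors of $N$. *)

theory Defs
  imports Complex_Main
begin

text \<open>Smallest denominator of a rational number in E (E is assumed to contain a rational).\<close>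
definition qden :: "real set \<Rightarrow> nat" where
  "qden E = (LEAST q::nat. q > 0 \<and> (\<exists>p::int. real_of_int p / real q \<in> E))"

definition S :: "nat \<Rightarrow> nat" where
  "S N = (\<Sum>j=1..N. qden {real (j-1) / real N <.. real j / real N})"

definition Sbar :: "nat \<Rightarrow> nat" where
  "Sbar N = (\<Sum>j=1..N. qden {real (j-1) / real N .. real j / real N})"

definition Stilde :: "nat \<Rightarrow> nat" where
  "Stilde N = (\<Sum>j=1..N. qden {real (j-1) / real N <..< real j / real N})"

definition tau :: "nat \<Rightarrow> nat" where
  "tau N = card {d. d dvd N}"

end

theory Submission
  imports Defs
begin

lemma key_den:
  fixes k N :: nat and m :: int
  assumes "N > 0" "q > 0" "real_of_int m / real q = real k / real N"
  shows "N div gcd k N \<le> q"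
proof -
  define g where "g = gcd k N"
  have g0: "g > 0" unfolding g_def using assms(1) by simp
  obtain p d where pd: "k = p * g" "N = d * g" "coprime p d"
    using gcd_coprime_exists[of k N] g0 unfolding g_def by blast
  have dd: "N div g = d" using pd(2) g0 by simp
  have "real_of_int m * real N = real k * real q" using assms
    by (simp add: divide_eq_eq eq_divide_eq)
  hence "real_of_int (m * int N) = real_of_int (int k * int q)"
    by simp
  hence "m * int N = int k * int q"
    by (rule of_int_eq_iff[THEN iffD1])
  hence "(m * int d) * int g = (int p * int q) * int g" unfolding pd by (simp add: algebra_simps)
  hence "m * int d = int p * int q" using g0 by simp
  hence "int d dvd int p * int q" by (metis dvd_triv_right)
  moreover have "coprime (int d) (int p)" using pd by (simp add: coprime_commute)
  ultimately have "int d dvd int q" using coprime_dvd_mult_right_iff by blast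
  hence "d dvd q" by simp
  hence "d \<le> q" using assms by (simp add: dvd_imp_le)
  thus ?thesis using dd g_def by simp
qed
lemma key_ex:
  fixes k N :: nat and e :: int
  assumes "N > 0" "e = 1 \<or> e = -1"
  shows "\<exists>r::int. \<exists>s::nat. gcd k N < s \<and> s \<le> gcd k N + N div gcd k N \<and>
     real_of_int r / real s - real k / real N = real_of_int e / (real s * real (N div gcd k N))"
proof -
  define g where "g = gcd k N"
  have g0: "g > 0" unfolding g_def using assms(1) by simp
  obtain p d where pd: "k = p * g" "N = d * g" "coprime p d"
    using gcd_coprime_exists[of k N] g0 unfolding g_def by blast
  have dd: "N div g = d" using pd(2) g0 by simp
  have d0: "d > 0" using pd(2) assms(1) by (cases d) auto
  have "coprime (int p) (int d)" using pd by simp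
  hence "gcd (int p) (int d) = 1" by simp
  then obtain u v where uv: "u * int p + v * int d = 1"
    using bezout_int[of "int p" "int d"] by auto
  define s0 where "s0 = - u * e"
  define r0 where "r0 = v * e"
  have "r0 * int d - int p * s0 = e * (u * int p + v * int d)" unfolding s0_def r0_def
    by (simp add: algebra_simps)
  hence e0: "r0 * int d - int p * s0 = e" using uv by simp
  define si where "si = int g + 1 + (s0 - int g - 1) mod int d"
  have m1: "0 \<le> (s0 - int g - 1) mod int d" "(s0 - int g - 1) mod int d < int d"
    using d0 by simp_all
  have si1: "si > int g" "si \<le> int g + int d" unfolding si_def using m1 by linarith+
  define t where "t = - ((s0 - int g - 1) div int d)"
  have t0: "si - s0 = - (int d * ((s0 - int g - 1) div int d))" unfolding si_def
    using mult_div_mod_eq[of "int d" "s0 - int g - 1"] by linarith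
  have t: "si - s0 = int d * t" unfolding t_def using t0 by simp
  define r where "r = r0 + t * int p"
  have "r * int d - int p * si = r0 * int d - int p * s0 - int p * (si - s0) + t * int p * int d"
    unfolding r_def by (simp add: algebra_simps)
  also have "\<dots> = e" using e0 t by (simp add: algebra_simps)
  finally have er: "r * int d - int p * si = e" .
  define s where "s = nat si"
  have ss: "int s = si" using si1 g0 unfolding s_def by simp
  have s1: "g < s" "s \<le> g + d" using si1 ss by linarith+
  have er2: "r * int d - int p * int s = e" using er ss by simp
  have "real_of_int (r * int d - int p * int s) = real_of_int e" using er2 by (simp only:)
  hence erR: "real_of_int r * real d - real p * real s = real_of_int e"
    by simp
  have sp: "real s > 0" using s1 by simp
  have dp: "real d > 0" "real g > 0" using d0 g0 by simp_all
  have "real_of_int r / real s - real k / real N = (real_of_int r * real d - real p * real s) / (real s * real d)"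
    unfolding pd using sp dp by (simp add: field_simps)
  also have "\<dots> = real_of_int e / (real s * real d)" using erR by simp
  finally show ?thesis using s1 dd g_def by blast
qed

lemma qden_le:
  assumes "q > 0" "real_of_int p / real q \<in> E"
  shows "qden E \<le> q"
  unfolding qden_def by (rule Least_le) (use assms in auto)

lemma qden_ex:
  assumes "q > 0" "real_of_int p / real q \<in> E"
  shows "qden E > 0 \<and> (\<exists>p::int. real_of_int p / real (qden E) \<in> E)"
proof -
  have "\<exists>q::nat. q > 0 \<and> (\<exists>p::int. real_of_int p / real q \<in> E)" using assms by blast
  then show ?thesis unfolding qden_def by (rule LeastI_ex)
qed

lemma small_gap:
  fixes k N s :: nat
  assumes "N > 0" "gcd k N < s"
  shows "0 < 1 / (real s * real (N div gcd k N))" "1 / (real s * real (N div gcd k N)) < 1 / real N"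
proof -
  define g where "g = gcd k N"
  define D where "D = N div g"
  have g0: "g > 0" unfolding g_def using assms(1) by simp
  have gD: "g * D = N" unfolding D_def g_def by simp
  have D0: "D > 0" using gD assms(1) by (cases D) auto
  have "g * D < s * D" using assms(2) D0 unfolding g_def by simp
  hence "N < s * D" using gD by simp
  hence lt: "real N < real s * real D" by (metis of_nat_less_iff of_nat_mult)
  have "real s > 0" using assms(2) by simp
  thus "0 < 1 / (real s * real (N div gcd k N))" using D0 unfolding D_def g_def by simp
  show "1 / (real s * real (N div gcd k N)) < 1 / real N"
    using lt assms(1) unfolding D_def g_def by (simp add: frac_less2)
qed

lemma aux1: "(x::real) - a = c \<Longrightarrow> 0 < c \<Longrightarrow> c < t \<Longrightarrow> a < x \<and> x \<le> a + t" by linarith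
lemma aux2: "(x::real) - b = - c \<Longrightarrow> 0 < c \<Longrightarrow> c < t \<Longrightarrow> b - t < x \<and> x < b" by linarith

lemma term_half:
  fixes N j :: nat
  assumes "N > 0" "1 \<le> j"
  shows "qden {real (j-1) / real N <.. real j / real N}
     \<le> qden {real (j-1) / real N .. real j / real N} + gcd (j-1) N"
proof -
  define a where "a = real (j-1) / real N"
  define b where "b = real j / real N"
  have ab: "b = a + 1 / real N" unfolding a_def b_def using assms
    by (simp add: of_nat_diff add_divide_distrib[symmetric])
  have Np: "real N > 0" using assms by simp
  have bj: "real_of_int (int j) / real N = b" unfolding b_def by simp
  have wit: "real_of_int (int j) / real N \<in> {a .. b}" unfolding bj using ab Np by simp
  obtain m where qf: "qden {a..b} > 0" and m: "real_of_int m / real (qden {a..b}) \<in> {a..b}"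
    using qden_ex[OF assms(1) wit] by blast
  show ?thesis
  proof (cases "real_of_int m / real (qden {a..b}) \<in> {a<..b}")
    case True
    thus ?thesis using qden_le[OF qf True] unfolding a_def b_def by simp
  next
    case False
    hence eq: "real_of_int m / real (qden {a..b}) = real (j-1) / real N" using m a_def by auto
    have dle: "N div gcd (j-1) N \<le> qden {a..b}" using key_den[OF assms(1) qf eq] .
    obtain r s where rs: "gcd (j-1) N < s" "s \<le> gcd (j-1) N + N div gcd (j-1) N"
      "real_of_int r / real s - real (j-1) / real N = real_of_int 1 / (real s * real (N div gcd (j-1) N))"
      using key_ex[OF assms(1), of 1 "j-1"] by auto
    note sg = small_gap[OF assms(1) rs(1)]
    have "a < real_of_int r / real s \<and> real_of_int r / real s \<le> a + 1 / real N"
      using aux1[OF _ sg] rs(3) unfolding a_def by simp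
    hence "real_of_int r / real s \<in> {a<..b}" using ab by simp
    moreover have "s > 0" using rs(1) by simp
    ultimately have "qden {a<..b} \<le> s" using qden_le by blast
    thus ?thesis using rs(2) dle unfolding a_def b_def by simp
  qed
qed

lemma term_open:
  fixes N j :: nat
  assumes "N > 0" "1 \<le> j"
  shows "qden {real (j-1) / real N <..< real j / real N}
     \<le> qden {real (j-1) / real N <.. real j / real N} + gcd j N"
proof -
  define a where "a = real (j-1) / real N"
  define b where "b = real j / real N"
  have ab: "b = a + 1 / real N" unfolding a_def b_def using assms
    by (simp add: of_nat_diff add_divide_distrib[symmetric])
  have Np: "real N > 0" using assms by simp
  have bj: "real_of_int (int j) / real N = b" unfolding b_def by simp
  have wit: "real_of_int (int j) / real N \<in> {a <.. b}" unfolding bj using ab Np by simp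
  obtain m where qf: "qden {a<..b} > 0" and m: "real_of_int m / real (qden {a<..b}) \<in> {a<..b}"
    using qden_ex[OF assms(1) wit] by blast
  show ?thesis
  proof (cases "real_of_int m / real (qden {a<..b}) \<in> {a<..<b}")
    case True
    thus ?thesis using qden_le[OF qf True] unfolding a_def b_def by simp
  next
    case False
    hence eq: "real_of_int m / real (qden {a<..b}) = real j / real N" using m b_def by auto
    have dle: "N div gcd j N \<le> qden {a<..b}" using key_den[OF assms(1) qf eq] .
    obtain r s where rs: "gcd j N < s" "s \<le> gcd j N + N div gcd j N"
      "real_of_int r / real s - real j / real N = real_of_int (-1) / (real s * real (N div gcd j N))"
      using key_ex[OF assms(1), of "-1" j] by auto
    note sg = small_gap[OF assms(1) rs(1)]
    have "b - 1 / real N < real_of_int r / real s \<and> real_of_int r / real s < b"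
      using aux2[OF _ sg] rs(3) unfolding b_def by simp
    hence "real_of_int r / real s \<in> {a<..<b}" using ab by simp
    moreover have "s > 0" using rs(1) by simp
    ultimately have "qden {a<..<b} \<le> s" using qden_le by blast
    thus ?thesis using rs(2) dle unfolding a_def b_def by simp
  qed
qed

lemma gcd_sum_gen:
  fixes N :: nat and A :: "nat set"
  assumes "N > 0" "finite A" "\<And>d. d dvd N \<Longrightarrow> d * card {i\<in>A. d dvd i} \<le> N"
  shows "(\<Sum>i\<in>A. gcd i N) \<le> N * tau N"
proof -
  let ?D = "{d. d dvd N}"
  have fD: "finite ?D" using assms(1) by simp
  have "(\<Sum>i\<in>A. gcd i N) \<le> (\<Sum>i\<in>A. \<Sum>d\<in>?D. (if d dvd i then d else 0))"
  proof (rule sum_mono)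
    fix i assume "i \<in> A"
    have "gcd i N \<in> ?D" by simp
    hence "(if gcd i N dvd i then gcd i N else 0) \<le> (\<Sum>d\<in>?D. (if d dvd i then d else 0))"
      by (rule member_le_sum[OF _ _ fD]) simp
    thus "gcd i N \<le> (\<Sum>d\<in>?D. (if d dvd i then d else 0))" by simp
  qed
  also have "\<dots> = (\<Sum>d\<in>?D. \<Sum>i\<in>A. (if d dvd i then d else 0))" by (rule sum.swap)
  also have "\<dots> = (\<Sum>d\<in>?D. d * card {i\<in>A. d dvd i})"
  proof (rule sum.cong[OF refl])
    fix d
    have "(\<Sum>i\<in>A. (if d dvd i then d else 0)) = (\<Sum>i\<in>{i\<in>A. d dvd i}. d)"
      using assms(2) by (simp add: sum.inter_filter[symmetric])
    thus "(\<Sum>i\<in>A. (if d dvd i then d else 0)) = d * card {i\<in>A. d dvd i}" by simp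
  qed
  also have "\<dots> \<le> (\<Sum>d\<in>?D. N)" by (rule sum_mono) (use assms(3) in simp)
  also have "\<dots> = N * tau N" unfolding tau_def by simp
  finally show ?thesis .
qed

lemma count_lt:
  assumes "d dvd (N::nat)" "N > 0"
  shows "d * card {i\<in>{..<N}. d dvd i} \<le> N"
proof -
  have d0: "d > 0" using assms by (cases d) auto
  have "{i\<in>{..<N}. d dvd i} \<subseteq> (\<lambda>k. d * k) ` {..<N div d}"
  proof
    fix i assume "i \<in> {i\<in>{..<N}. d dvd i}"
    then obtain k where k: "i = d * k" "i < N" by auto
    hence "d * k < d * (N div d)" using assms(1) by simp
    hence "k < N div d" using d0 by simp
    thus "i \<in> (\<lambda>k. d * k) ` {..<N div d}" using k by auto
  qed
  hence "card {i\<in>{..<N}. d dvd i} \<le> card ((\<lambda>k. d * k) ` {..<N div d})"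
    by (rule card_mono[rotated]) simp
  also have "\<dots> \<le> N div d" using card_image_le[of "{..<N div d}" "\<lambda>k. d * k"] by simp
  finally have "d * card {i\<in>{..<N}. d dvd i} \<le> d * (N div d)" by simp
  thus ?thesis using assms(1) by simp
qed

lemma count_1N:
  assumes "d dvd (N::nat)" "N > 0"
  shows "d * card {i\<in>{1..N}. d dvd i} \<le> N"
proof -
  have d0: "d > 0" using assms by (cases d) auto
  have "{i\<in>{1..N}. d dvd i} \<subseteq> (\<lambda>k. d * k) ` {1..N div d}"
  proof
    fix i assume "i \<in> {i\<in>{1..N}. d dvd i}"
    then obtain k where k: "i = d * k" "i \<le> N" "1 \<le> i" by auto
    hence "d * k \<le> d * (N div d)" using assms(1) by simp
    hence "k \<le> N div d" using d0 by simp
    moreover have "k \<ge> 1" using k by (cases k) auto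
    ultimately show "i \<in> (\<lambda>k. d * k) ` {1..N div d}" using k by auto
  qed
  hence "card {i\<in>{1..N}. d dvd i} \<le> card ((\<lambda>k. d * k) ` {1..N div d})"
    by (rule card_mono[rotated]) simp
  also have "\<dots> \<le> N div d" using card_image_le[of "{1..N div d}" "\<lambda>k. d * k"] by simp
  finally have "d * card {i\<in>{1..N}. d dvd i} \<le> d * (N div d)" by simp
  thus ?thesis using assms(1) by simp
qed

lemma sum1: "N > 0 \<Longrightarrow> (\<Sum>j=1..N. gcd j N) \<le> N * tau N"
proof (rule gcd_sum_gen)
  fix d assume "N > 0" "d dvd N" thus "d * card {i\<in>{1..N}. d dvd i} \<le> N" by (rule count_1N[rotated])
qed simp_all

lemma sum0: "N > 0 \<Longrightarrow> (\<Sum>j=1..N. gcd (j-1) N) \<le> N * tau N"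
proof -
  assume N: "N > 0"
  have "(\<Sum>j=1..N. gcd (j-1) N) = (\<Sum>i\<in>{..<N}. gcd i N)"
    by (rule sum.reindex_bij_witness[where i="\<lambda>i. i + 1" and j="\<lambda>j. j - 1"]) auto
  also have "\<dots> \<le> N * tau N" proof (rule gcd_sum_gen)
    fix d assume "d dvd N" thus "d * card {i\<in>{..<N}. d dvd i} \<le> N" using N by (rule count_lt)
  qed (simp_all add: N)
  finally show ?thesis .
qed
theorem proposition7:
  fixes N :: nat
  assumes "N \<ge> 1"
  shows "int (Stilde N) - int (S N) \<le> int (N * tau N)
       \<and> int (S N) - int (Sbar N) \<le> int (N * tau N)"
proof -
  have N0: "N > 0" using assms by simp
  have "Stilde N \<le> (\<Sum>j=1..N. qden {real (j-1) / real N <.. real j / real N} + gcd j N)"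
    unfolding Stilde_def by (rule sum_mono) (use term_open[OF N0] in simp)
  also have "\<dots> = S N + (\<Sum>j=1..N. gcd j N)" unfolding S_def by (simp add: sum.distrib)
  finally have 1: "Stilde N \<le> S N + N * tau N" using sum1[OF N0] by linarith
  have "S N \<le> (\<Sum>j=1..N. qden {real (j-1) / real N .. real j / real N} + gcd (j-1) N)"
    unfolding S_def by (rule sum_mono) (use term_half[OF N0] in simp)
  also have "\<dots> = Sbar N + (\<Sum>j=1..N. gcd (j-1) N)" unfolding Sbar_def by (simp add: sum.distrib)
  finally have 2: "S N \<le> Sbar N + N * tau N" using sum0[OF N0] by linarith
  show ?thesis using 1 2 by linarith
qed

end
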